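(* Let $H$ be an ASC-hypergraph and $M\subseteq H$. Then the following are equivalent: (a) every $M$-antichain misses $H$, and $|M|=|\bigcup H|$; (b) $M$ is a construction of $H$.
   Context: A hypergraph is a finite set $H$ of nonempty subsets of some finite set; its carrier is $\bigcup H$. For a family $F$ and set $Y$, $F_Y=\{X\in F\mid X\subseteq Y\}$. A hypergraph partition of $H$ is a partition $\{H_1,\dots,H_n\}$ ($n\ge0$) of the set $H$ with $\{\bigcup H_1,\dots,\bigcup H_n\}$ a partition of $\bigcup H$; $H$ is connected if it has exactly one hypergraph partition (the empty hypergraph is connected); the finest hypergraph partition is the unique one whose blocks are connected. $H$ is atomic if $\{x\}\in H$ for all $x\in\bigcup H$; saturated if $X_1,X_2\in H$ with $X_1\cap X_2\neq\emptyset$ imply $X_1\cup X_2\in H$. An ASC-hypergraph is one that is atomic, saturated and connected. Constructions of an atomic $H$, by induction on $|\bigcup H|$: (0) $\emptyset$ is the only construction of $\emptyset$; (1) if $|\bigcup H|\ge1$, $H$ connected, $x\in\bigcup H$, $K$ a construction of $H_{\bigcup H\setminus\{x\}}$, then $K\cup\{\bigcup H\}$ is a construction of $H$; (2) if $H$ is not connected with finest hypergraph partition $\{H_1,\dots,H_n\}$, $n\ge2$, and $K_i$ is a construction of $H_i$, then $K_1\cup\dots\cup K_n$ is a construction of $H$. For $M\subseteq H$, an $M$-antichain is a subset $S\subseteq M$ with $|S|\ge2$ such that no member of $S$ is a subset of another member of $S$; it misses $H$ when $\bigcup S\notin H$. *)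

theory Defs
  imports "HOL-Library.Disjoint_Sets"
begin

definition hypergraph :: "'a set set \<Rightarrow> bool" where
  "hypergraph H \<longleftrightarrow> finite H \<and> (\<forall>X\<in>H. X \<noteq> {} \<and> finite X)"

definition restr :: "'a set set \<Rightarrow> 'a set \<Rightarrow> 'a set set" where
  "restr F Y = {X \<in> F. X \<subseteq> Y}"

text \<open>A hypergraph partition: a partition P of H such that the carriers of the
  (distinct) blocks form a partition of the carrier of H (indexed family, hence inj_on).\<close>
definition hpartition :: "'a set set \<Rightarrow> 'a set set set \<Rightarrow> bool" where
  "hpartition H P \<longleftrightarrow> partition_on H P \<and> partition_on (\<Union>H) (Union ` P) \<and> inj_on Union P"

definition hconnected :: "'a set set \<Rightarrow> bool" where
  "hconnected H \<longleftrightarrow> (\<exists>!P. hpartition H P)"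

definition finest_hpartition :: "'a set set \<Rightarrow> 'a set set set \<Rightarrow> bool" where
  "finest_hpartition H P \<longleftrightarrow> hpartition H P \<and> (\<forall>B\<in>P. hconnected B)"

definition atomic :: "'a set set \<Rightarrow> bool" where
  "atomic H \<longleftrightarrow> (\<forall>x\<in>\<Union>H. {x} \<in> H)"

definition saturated :: "'a set set \<Rightarrow> bool" where
  "saturated H \<longleftrightarrow> (\<forall>X1\<in>H. \<forall>X2\<in>H. X1 \<inter> X2 \<noteq> {} \<longrightarrow> X1 \<union> X2 \<in> H)"

definition ASC :: "'a set set \<Rightarrow> bool" where
  "ASC H \<longleftrightarrow> atomic H \<and> saturated H \<and> hconnected H"

inductive construction :: "'a set set \<Rightarrow> 'a set set \<Rightarrow> bool" where
  empty: "construction {} {}"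
| conn: "\<lbrakk>hypergraph H; atomic H; \<Union>H \<noteq> {}; hconnected H; x \<in> \<Union>H;
          construction (restr H (\<Union>H - {x})) K\<rbrakk>
         \<Longrightarrow> construction H (insert (\<Union>H) K)"
| disc: "\<lbrakk>hypergraph H; atomic H; \<not> hconnected H; finest_hpartition H P; card P \<ge> 2;
          \<forall>B\<in>P. construction B (Ks B)\<rbrakk>
         \<Longrightarrow> construction H (\<Union>B\<in>P. Ks B)"

definition antichain :: "'a set set \<Rightarrow> 'a set set \<Rightarrow> bool" where
  "antichain M S \<longleftrightarrow> S \<subseteq> M \<and> 2 \<le> card S \<and> (\<forall>X\<in>S. \<forall>Y\<in>S. X \<subseteq> Y \<longrightarrow> X = Y)"

definition misses :: "'a set set \<Rightarrow> 'a set set \<Rightarrow> bool" where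
  "misses H S \<longleftrightarrow> \<Union>S \<notin> H"

end

theory Submission
  imports Defs
begin


definition mx :: "'a set set \<Rightarrow> 'a set set" where
  "mx F = {Y \<in> F. \<forall>Z\<in>F. Y \<subseteq> Z \<longrightarrow> Y = Z}"

lemma mx_above: "finite F \<Longrightarrow> Y \<in> F \<Longrightarrow> \<exists>Z\<in>mx F. Y \<subseteq> Z"
  using finite_has_maximal2[of F Y] unfolding mx_def by auto

lemma mx_sub: "mx F \<subseteq> F" unfolding mx_def by auto

lemma Union_mx: "finite F \<Longrightarrow> \<Union>(mx F) = \<Union>F"
  using mx_above[of F] mx_sub[of F] by blast

lemma cover:
  assumes anti: "\<forall>S. antichain M S \<longrightarrow> misses H S"
    and FM: "F \<subseteq> M" and fin: "finite F" and inH: "\<Union>F \<in> H" and nin: "\<Union>F \<notin> F"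
    and ne: "\<Union>F \<noteq> {}"
  shows False
proof -
  define S where "S = mx F"
  have US: "\<Union>S = \<Union>F" using Union_mx[OF fin] S_def by simp
  have finS: "finite S" using fin mx_sub[of F] S_def finite_subset by blast
  have "card S \<ge> 2"
  proof (rule ccontr)
    assume "\<not> card S \<ge> 2"
    hence "card S = 0 \<or> card S = 1" by auto
    thus False
    proof
      assume "card S = 0" hence "S = {}" using finS by simp
      thus False using US ne by simp
    next
      assume "card S = 1" then obtain Y where "S = {Y}" by (auto simp: card_Suc_eq)
      thus False using US nin mx_sub[of F] S_def by auto
    qed
  qed
  hence "antichain M S" unfolding antichain_def S_def mx_def using FM by auto
  thus False using anti inH US unfolding misses_def by auto
qed

lemma laminar:
  assumes sat: "saturated H" and MH: "M \<subseteq> H" and anti: "\<forall>S. antichain M S \<longrightarrow> misses H S"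
    and X: "X \<in> M" and Y: "Y \<in> M" and n1: "\<not> X \<subseteq> Y" and n2: "\<not> Y \<subseteq> X"
  shows "X \<inter> Y = {}"
proof (rule ccontr)
  assume ne: "X \<inter> Y \<noteq> {}"
  have "X \<noteq> Y" using n1 by auto
  hence "antichain M {X, Y}" unfolding antichain_def using X Y n1 n2 by auto
  hence "X \<union> Y \<notin> H" using anti unfolding misses_def by auto
  moreover have "X \<union> Y \<in> H" using sat ne X Y MH unfolding saturated_def by auto
  ultimately show False by simp
qed

lemma lemA:
  assumes hyp: "hypergraph H" and sat: "saturated H" and MH: "M \<subseteq> H"
    and anti: "\<forall>S. antichain M S \<longrightarrow> misses H S"
  shows "card M \<le> card (\<Union>M)"
proof -
  have finH: "finite H" and elts: "\<And>X. X \<in> H \<Longrightarrow> X \<noteq> {} \<and> finite X"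
    using hyp unfolding hypergraph_def by auto
  have finM: "finite M" using finH MH finite_subset by blast
  define f where "f X = (SOME a. a \<in> X - \<Union>{Y\<in>M. Y \<subset> X})" for X
  have key: "X - \<Union>{Y\<in>M. Y \<subset> X} \<noteq> {}" if X: "X \<in> M" for X
  proof
    assume e: "X - \<Union>{Y\<in>M. Y \<subset> X} = {}"
    let ?F = "{Y\<in>M. Y \<subset> X}"
    have "\<Union>?F = X" using e by blast
    moreover have "finite ?F" using finM by simp
    ultimately show False using cover[OF anti, of ?F] X MH elts by auto
  qed
  have fX: "f X \<in> X - \<Union>{Y\<in>M. Y \<subset> X}" if "X \<in> M" for X
    unfolding f_def using key[OF that] by (metis some_in_eq)
  have "inj_on f M"
  proof (rule inj_onI)
    fix X Y assume X: "X \<in> M" and Y: "Y \<in> M" and eq: "f X = f Y"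
    show "X = Y"
    proof (rule ccontr)
      assume "X \<noteq> Y"
      have a1: "f X \<in> X" "f Y \<in> Y" using fX X Y by auto
      have "X \<inter> Y \<noteq> {}" using a1 eq by auto
      hence "X \<subseteq> Y \<or> Y \<subseteq> X" using laminar[OF sat MH anti X Y] by auto
      hence "X \<subset> Y \<or> Y \<subset> X" using \<open>X \<noteq> Y\<close> by auto
      thus False
      proof
        assume "X \<subset> Y"
        hence "f X \<in> \<Union>{Z\<in>M. Z \<subset> Y}" using X a1 by blast
        thus False using fX[OF Y] eq by simp
      next
        assume "Y \<subset> X"
        hence "f Y \<in> \<Union>{Z\<in>M. Z \<subset> X}" using Y a1 by blast
        thus False using fX[OF X] eq by simp
      qed
    qed
  qed
  moreover have "f ` M \<subseteq> \<Union>M" using fX by blast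
  moreover have "finite (\<Union>M)" using finM MH elts by auto
  ultimately show ?thesis by (rule card_inj_on_le)
qed

lemma triv_hpart:
  assumes hyp: "hypergraph H" and ne: "H \<noteq> {}"
  shows "hpartition H {H}"
proof -
  have "\<Union>H \<noteq> {}" using hyp ne unfolding hypergraph_def by auto
  hence "partition_on (\<Union>H) (Union ` {H})" by (simp add: partition_on_def)
  moreover have "partition_on H {H}" using ne by (simp add: partition_on_def)
  ultimately show ?thesis unfolding hpartition_def by simp
qed

lemma hcon_carrier:
  assumes hyp: "hypergraph B" and inB: "\<Union>B \<in> B"
  shows "hconnected B"
proof -
  have ne: "B \<noteq> {}" using inB by auto
  have uniq: "Q = {B}" if Q: "hpartition B Q" for Q
  proof -
    have p1: "partition_on B Q" and p2: "partition_on (\<Union>B) (Union ` Q)" and ij: "inj_on Union Q"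
      using Q unfolding hpartition_def by auto
    obtain Q0 where Q0: "Q0 \<in> Q" "\<Union>B \<in> Q0" using p1 inB unfolding partition_on_def by auto
    have "Q1 = Q0" if Q1: "Q1 \<in> Q" for Q1
    proof (rule ccontr)
      assume d: "Q1 \<noteq> Q0"
      have "Q1 \<noteq> {}" using p1 Q1 unfolding partition_on_def by auto
      then obtain X where X: "X \<in> Q1" by auto
      have XB: "X \<in> B" using X Q1 p1 unfolding partition_on_def by auto
      hence "X \<noteq> {}" using hyp unfolding hypergraph_def by auto
      moreover have "X \<subseteq> \<Union>Q1" using X by auto
      moreover have "X \<subseteq> \<Union>Q0" using XB Q0 by auto
      moreover have "\<Union>Q1 \<inter> \<Union>Q0 = {}"
      proof -
        have "\<Union>Q1 \<noteq> \<Union>Q0" using ij d Q1 Q0 unfolding inj_on_def by auto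
        thus "\<Union>Q1 \<inter> \<Union>Q0 = {}" using disjointD[OF partition_onD2[OF p2], of "\<Union>Q1" "\<Union>Q0"] Q1 Q0
          by blast
      qed
      ultimately show False by blast
    qed
    hence "Q = {Q0}" using Q0 by blast
    thus ?thesis using p1 unfolding partition_on_def by auto
  qed
  show ?thesis unfolding hconnected_def
    by (rule ex1I[of _ "{B}"]) (use triv_hpart[OF hyp ne] uniq in blast)+
qed

lemma restr_carrier:
  assumes at: "atomic H" and Y: "Y \<subseteq> \<Union>H"
  shows "\<Union>(restr H Y) = Y"
proof
  show "\<Union>(restr H Y) \<subseteq> Y" unfolding restr_def by auto
  show "Y \<subseteq> \<Union>(restr H Y)"
  proof
    fix y assume y: "y \<in> Y"
    hence "{y} \<in> H" using at Y unfolding atomic_def by auto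
    hence "{y} \<in> restr H Y" using y unfolding restr_def by auto
    thus "y \<in> \<Union>(restr H Y)" by auto
  qed
qed


lemma sub_minus: "x \<in> A \<Longrightarrow> \<not> A \<subseteq> A - {x}" by auto

lemma constr_props:
  assumes "construction H K"
  shows "(\<forall>X\<in>K. X \<noteq> {} \<and> X \<subseteq> \<Union>H) \<and> finite K \<and> card K = card (\<Union>H)
         \<and> (\<forall>S. antichain K S \<longrightarrow> \<Union>S \<notin> H)"
  using assms
proof (induction rule: construction.induct)
  case empty
  then show ?case by (auto simp: antichain_def)
next
  case (conn H x K)
  let ?H' = "restr H (\<Union>H - {x})"
  have U': "\<Union>?H' = \<Union>H - {x}"
    using restr_carrier[OF conn.hyps(2)] by blast
  have finU: "finite (\<Union>H)" using conn.hyps(1) unfolding hypergraph_def by auto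
  have IH: "\<forall>X\<in>K. X \<noteq> {} \<and> X \<subseteq> \<Union>H - {x}" "finite K" "card K = card (\<Union>H - {x})"
     "\<forall>S. antichain K S \<longrightarrow> \<Union>S \<notin> ?H'"
    using conn.IH U' by auto
  have nin: "\<Union>H \<notin> K"
  proof
    assume a: "\<Union>H \<in> K"
    have "\<Union>H \<subseteq> \<Union>H - {x}" using bspec[OF IH(1) a] by (rule conjunct2)
    thus False using sub_minus[OF conn.hyps(5)] by simp
  qed
  have c: "card (insert (\<Union>H) K) = card (\<Union>H)"
  proof -
    have "card (\<Union>H) > 0" using finU conn.hyps(5) card_gt_0_iff by blast
    thus ?thesis using IH(2,3) nin finU conn.hyps(5) by (simp add: card_Suc_Diff1)
  qed
  have a: "\<Union>S \<notin> H" if S: "antichain (insert (\<Union>H) K) S" for S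
  proof
    assume inH: "\<Union>S \<in> H"
    have SK: "S \<subseteq> K"
    proof
      fix Y assume Y: "Y \<in> S"
      show "Y \<in> K"
      proof (rule ccontr)
        assume "Y \<notin> K"
        hence YV: "Y = \<Union>H" using S Y unfolding antichain_def by auto
        have "card S \<ge> 2" using S unfolding antichain_def by auto
        have "\<exists>Z\<in>S. Z \<noteq> Y"
        proof (rule ccontr)
          assume "\<not> (\<exists>Z\<in>S. Z \<noteq> Y)"
          hence "S \<subseteq> {Y}" by auto
          hence "card S \<le> 1" using card_mono[of "{Y}" S] by simp
          thus False using \<open>card S \<ge> 2\<close> by simp
        qed
        then obtain Z where Z: "Z \<in> S" "Z \<noteq> Y" by auto
        have "Z \<in> K" using Z YV S unfolding antichain_def by auto
        hence "Z \<subseteq> Y" using IH(1) YV by auto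
        thus False using S Z Y unfolding antichain_def by auto
      qed
    qed
    hence "antichain K S" using S unfolding antichain_def by auto
    moreover have "\<Union>S \<subseteq> \<Union>H - {x}" using SK IH(1) by auto
    ultimately show False using IH(4) inH unfolding restr_def by auto
  qed
  show ?case using IH(1,2) c a conn.hyps(3) by auto
next
  case (disc H P Ks)
  have hp: "partition_on H P" "partition_on (\<Union>H) (Union ` P)" "inj_on Union P"
    using disc.hyps(4) unfolding finest_hpartition_def hpartition_def by auto
  have finH: "finite H" and fU: "finite (\<Union>H)" using disc.hyps(1) unfolding hypergraph_def by auto
  have finP: "finite P" using hp(1) finH unfolding partition_on_def
    by (metis finite_UnionD)
  have dj: "\<Union>B1 \<inter> \<Union>B2 = {}" if "B1 \<in> P" "B2 \<in> P" "B1 \<noteq> B2" for B1 B2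
  proof -
    have "\<Union>B1 \<noteq> \<Union>B2" using hp(3) that unfolding inj_on_def by auto
    thus ?thesis using disjointD[OF partition_onD2[OF hp(2)], of "\<Union>B1" "\<Union>B2"] that by blast
  qed
  have BH: "B \<subseteq> H" if "B \<in> P" for B using hp(1) that unfolding partition_on_def by auto
  have IH: "\<forall>X\<in>Ks B. X \<noteq> {} \<and> X \<subseteq> \<Union>B" "finite (Ks B)" "card (Ks B) = card (\<Union>B)"
     "\<forall>S. antichain (Ks B) S \<longrightarrow> \<Union>S \<notin> B" if "B \<in> P" for B
    using disc.IH that by auto
  have same: "B1 = B2" if "B1 \<in> P" "B2 \<in> P" "X \<in> Ks B1" "X \<subseteq> \<Union>B2" for B1 B2 X
  proof (rule ccontr)
    assume "B1 \<noteq> B2"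
    hence "\<Union>B1 \<inter> \<Union>B2 = {}" using dj that by auto
    thus False using IH(1)[OF that(1)] that by blast
  qed
  have c1: "card (\<Union>B\<in>P. Ks B) = (\<Sum>B\<in>P. card (Ks B))"
  proof (rule card_UN_disjoint)
    show "finite P" by fact
    show "\<forall>i\<in>P. finite (Ks i)" using IH(2) by auto
    show "\<forall>i\<in>P. \<forall>j\<in>P. i \<noteq> j \<longrightarrow> Ks i \<inter> Ks j = {}"
      using same IH(1) by blast
  qed
  have c2: "card (\<Union>B\<in>P. \<Union>B) = (\<Sum>B\<in>P. card (\<Union>B))"
  proof (rule card_UN_disjoint)
    show "finite P" by fact
    show "\<forall>i\<in>P. finite (\<Union>i)" using BH fU by (meson Union_mono finite_subset)
    show "\<forall>i\<in>P. \<forall>j\<in>P. i \<noteq> j \<longrightarrow> \<Union>i \<inter> \<Union>j = {}" using dj by blast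
  qed
  have c3: "(\<Union>B\<in>P. \<Union>B) = \<Union>H" using hp(2) unfolding partition_on_def by auto
  have card: "card (\<Union>B\<in>P. Ks B) = card (\<Union>H)"
  proof -
    have "(\<Sum>B\<in>P. card (Ks B)) = (\<Sum>B\<in>P. card (\<Union>B))"
      by (rule sum.cong) (auto simp: IH(3))
    thus ?thesis using c1 c2 c3 by simp
  qed
  have a: "\<Union>S \<notin> H" if S: "antichain (\<Union>B\<in>P. Ks B) S" for S
  proof
    assume inH: "\<Union>S \<in> H"
    then obtain B0 where B0: "B0 \<in> P" "\<Union>S \<in> B0" using hp(1) unfolding partition_on_def by auto
    have "S \<subseteq> Ks B0"
    proof
      fix X assume X: "X \<in> S"
      then obtain B1 where B1: "B1 \<in> P" "X \<in> Ks B1" using S unfolding antichain_def by auto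
      have "X \<subseteq> \<Union>B0" using X B0 by auto
      hence "B1 = B0" using same B1 B0 by blast
      thus "X \<in> Ks B0" using B1 by simp
    qed
    hence "antichain (Ks B0) S" using S unfolding antichain_def by auto
    thus False using IH(4)[OF B0(1)] B0 by auto
  qed
  have sub: "\<forall>X\<in>(\<Union>B\<in>P. Ks B). X \<noteq> {} \<and> X \<subseteq> \<Union>H"
    using IH(1) BH by blast
  show ?case using sub card a finP IH(2) by auto
qed



lemma hyp_restr: "hypergraph H \<Longrightarrow> hypergraph (restr H Y)"
  unfolding hypergraph_def restr_def by auto

lemma atomic_restr: "atomic H \<Longrightarrow> atomic (restr H Y)"
  unfolding atomic_def restr_def by blast

lemma sat_restr: "saturated H \<Longrightarrow> saturated (restr H Y)"
  unfolding saturated_def restr_def by auto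

lemma restr_sub: "restr H Y \<subseteq> H" unfolding restr_def by auto

lemma anti_mono:
  assumes "\<forall>S. antichain M S \<longrightarrow> misses H S" "K \<subseteq> M" "H' \<subseteq> H"
  shows "\<forall>S. antichain K S \<longrightarrow> misses H' S"
proof (intro allI impI)
  fix S assume "antichain K S"
  hence "antichain M S" using assms(2) unfolding antichain_def by (meson subset_trans)
  hence "\<Union>S \<notin> H" using assms(1) unfolding misses_def by simp
  thus "misses H' S" using assms(3) unfolding misses_def by (meson subsetD)
qed

lemma main_aux:
  shows "\<And>H M. card (\<Union>H) = n \<Longrightarrow> hypergraph H \<Longrightarrow> atomic H \<Longrightarrow> saturated H \<Longrightarrow> M \<subseteq> H
    \<Longrightarrow> (\<forall>S. antichain M S \<longrightarrow> misses H S) \<Longrightarrow> card M = card (\<Union>H) \<Longrightarrow> construction H M"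
proof (induction n rule: less_induct)
  case (less n H M)
  note hyp = less.prems(2) and at = less.prems(3) and sat = less.prems(4)
    and MH = less.prems(5) and anti = less.prems(6) and cM = less.prems(7)
  have finH: "finite H" and elts: "\<And>X. X \<in> H \<Longrightarrow> X \<noteq> {} \<and> finite X"
    using hyp unfolding hypergraph_def by auto
  have finV: "finite (\<Union>H)" using finH elts by auto
  have finM: "finite M" using finH MH finite_subset by blast
  show ?case
  proof (cases "H = {}")
    case True
    hence "M = {}" using MH by auto
    thus ?thesis using True construction.empty by simp
  next
    case Hne: False
    define V where "V = \<Union>H"
    have Vne: "V \<noteq> {}" using Hne elts unfolding V_def by auto
    show ?thesis
    proof (cases "V \<in> H")
      case VH: True
      have A: "card M \<le> card (\<Union>M)" by (rule lemA[OF hyp sat MH anti])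
      have UMsub: "\<Union>M \<subseteq> V" using MH unfolding V_def by auto
      have UM: "\<Union>M = V"
      proof (rule ccontr)
        assume "\<Union>M \<noteq> V"
        hence "\<Union>M \<subset> V" using UMsub by auto
        hence "card (\<Union>M) < card V" using finV psubset_card_mono unfolding V_def by blast
        thus False using A cM unfolding V_def by simp
      qed
      have VM: "V \<in> M"
      proof (rule ccontr)
        assume "V \<notin> M"
        thus False using cover[OF anti, of M] finM UM VH Vne by auto
      qed
      define K where "K = M - {V}"
      have KM: "K \<subseteq> M" unfolding K_def by auto
      have finK: "finite K" using finM KM finite_subset by blast
      have cK: "card K = card V - 1" using cM VM finM unfolding K_def V_def by simp
      have UKsub: "\<Union>K \<subseteq> V" using UMsub KM by auto
      have UK: "\<Union>K \<noteq> V"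
      proof
        assume e: "\<Union>K = V"
        have "V \<notin> K" unfolding K_def by auto
        thus False using cover[OF anti KM finK] e VH Vne by simp
      qed
      obtain x where xV: "x \<in> V" and xK: "x \<notin> \<Union>K" using UKsub UK by blast
      define H' where "H' = restr H (V - {x})"
      have UH': "\<Union>H' = V - {x}" unfolding H'_def V_def
        by (rule restr_carrier[OF at]) auto
      have hyp': "hypergraph H'" unfolding H'_def by (rule hyp_restr[OF hyp])
      have at': "atomic H'" unfolding H'_def by (rule atomic_restr[OF at])
      have sat': "saturated H'" unfolding H'_def by (rule sat_restr[OF sat])
      have KH': "K \<subseteq> H'"
      proof
        fix X assume X: "X \<in> K"
        have "X \<in> H" using X KM MH by auto
        moreover have "X \<subseteq> V" using X UKsub by auto
        moreover have "x \<notin> X" using X xK by auto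
        ultimately show "X \<in> H'" unfolding H'_def restr_def by auto
      qed
      have anti': "\<forall>S. antichain K S \<longrightarrow> misses H' S"
        by (rule anti_mono[OF anti KM]) (simp add: H'_def restr_sub)
      have cV': "card (\<Union>H') = card V - 1" using UH' xV finV unfolding V_def by simp
      have "card (V - {x}) < card V" by (rule card_Diff1_less[OF _ xV]) (use finV in \<open>simp add: V_def\<close>)
      hence lt: "card (\<Union>H') < n" using UH' less.prems(1) V_def by simp
      have cK': "card K = card (\<Union>H')" using cK cV' by simp
      have cH': "construction H' K"
        by (rule less.IH[OF lt refl hyp' at' sat' KH' anti' cK'])
      have c1: "construction (restr H (\<Union>H - {x})) K" using cH' unfolding H'_def V_def .
      have "construction H (insert (\<Union>H) K)"
        by (rule construction.conn[OF hyp at _ hcon_carrier[OF hyp] _ c1])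
          (use Vne VH xV in \<open>simp_all add: V_def\<close>)
      moreover have "insert (\<Union>H) K = M" using VM unfolding K_def V_def by auto
      ultimately show ?thesis by simp
    next
      case VnH: False
      define Zs where "Zs = mx H"
      have ZsH: "Zs \<subseteq> H" unfolding Zs_def by (rule mx_sub)
      have finZs: "finite Zs" using ZsH finH finite_subset by blast
      have above: "\<exists>Z\<in>Zs. X \<subseteq> Z" if "X \<in> H" for X
        unfolding Zs_def by (rule mx_above[OF finH that])
      have UZs: "\<Union>Zs = V" unfolding Zs_def V_def by (rule Union_mx[OF finH])
      have dj: "Z1 \<inter> Z2 = {}" if Z1: "Z1 \<in> Zs" and Z2: "Z2 \<in> Zs" and d: "Z1 \<noteq> Z2" for Z1 Z2
      proof (rule ccontr)
        assume ne: "Z1 \<inter> Z2 \<noteq> {}"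
        have "Z1 \<union> Z2 \<in> H" using sat ne Z1 Z2 ZsH unfolding saturated_def by blast
        hence "Z1 = Z1 \<union> Z2" "Z2 = Z1 \<union> Z2" using Z1 Z2 unfolding Zs_def mx_def by auto
        thus False using d by simp
      qed
      have uq: "Z1 = Z2" if "X \<in> H" "Z1 \<in> Zs" "Z2 \<in> Zs" "X \<subseteq> Z1" "X \<subseteq> Z2" for X Z1 Z2
      proof (rule ccontr)
        assume "Z1 \<noteq> Z2"
        hence "Z1 \<inter> Z2 = {}" using dj that by simp
        moreover have "X \<noteq> {}" using elts that(1) by simp
        ultimately show False using that(4,5) by blast
      qed
      have Zne: "Z \<noteq> {}" if "Z \<in> Zs" for Z using elts ZsH that by blast
      have card2: "card Zs \<ge> 2"
      proof (rule ccontr)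
        assume "\<not> card Zs \<ge> 2"
        hence "card Zs = 0 \<or> card Zs = 1" by auto
        thus False
        proof
          assume "card Zs = 0" hence "Zs = {}" using finZs by simp
          thus False using UZs Vne by simp
        next
          assume "card Zs = 1" then obtain Z where "Zs = {Z}" by (auto simp: card_Suc_eq)
          thus False using UZs VnH ZsH by auto
        qed
      qed
      have Zlt: "card Z < n" if Z: "Z \<in> Zs" for Z
      proof -
        have "\<exists>Z'\<in>Zs. Z' \<noteq> Z"
        proof (rule ccontr)
          assume "\<not> (\<exists>Z'\<in>Zs. Z' \<noteq> Z)"
          hence "Zs \<subseteq> {Z}" by auto
          hence "card Zs \<le> 1" using card_mono[of "{Z}" Zs] by simp
          thus False using card2 by simp
        qed
        then obtain Z' where Z': "Z' \<in> Zs" "Z' \<noteq> Z" by blast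
        have "Z' \<inter> Z = {}" using dj Z Z' by simp
        moreover have "Z' \<noteq> {}" using Zne Z' by simp
        moreover have "Z' \<subseteq> V" "Z \<subseteq> V" using UZs Z Z' by auto
        ultimately have "Z \<subset> V" by blast
        hence "card Z < card V" using finV psubset_card_mono unfolding V_def by blast
        thus ?thesis using less.prems(1) V_def by simp
      qed
      have rU: "\<Union>(restr H Z) = Z" if "Z \<in> Zs" for Z
        using restr_carrier[OF at, of Z] that UZs V_def by blast
      have ZrZ: "Z \<in> restr H Z" if "Z \<in> Zs" for Z
        using that ZsH unfolding restr_def by auto
      define P where "P = (\<lambda>Z. restr H Z) ` Zs"
      have injr: "inj_on (\<lambda>Z. restr H Z) Zs"
        by (rule inj_onI) (metis rU)
      have cardP: "card P = card Zs" unfolding P_def using card_image[OF injr] .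
      have UP: "Union ` P = Zs"
      proof -
        have "Union ` P = (\<lambda>Z. \<Union>(restr H Z)) ` Zs" unfolding P_def by (simp add: image_image)
        also have "\<dots> = Zs" using rU by simp
        finally show ?thesis .
      qed
      have hpP: "hpartition H P"
        unfolding hpartition_def
      proof (intro conjI)
        show "partition_on H P"
        proof (rule partition_onI)
          show "\<Union>P = H"
          proof
            show "\<Union>P \<subseteq> H" unfolding P_def using restr_sub by blast
            show "H \<subseteq> \<Union>P"
            proof
              fix X assume X: "X \<in> H"
              then obtain Z where "Z \<in> Zs" "X \<subseteq> Z" using above by blast
              hence "X \<in> restr H Z" "restr H Z \<in> P" using X unfolding restr_def P_def by auto
              thus "X \<in> \<Union>P" by blast
            qed
          qed
          show "disjnt p q" if pq: "p \<in> P" "q \<in> P" "p \<noteq> q" for p q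
          proof -
            obtain Z1 Z2 where Z: "Z1 \<in> Zs" "Z2 \<in> Zs" "p = restr H Z1" "q = restr H Z2"
              using pq(1,2) unfolding P_def by blast
            show ?thesis unfolding disjnt_def
            proof (rule ccontr)
              assume "p \<inter> q \<noteq> {}"
              then obtain X where "X \<in> p" "X \<in> q" by blast
              hence "X \<in> H" "X \<subseteq> Z1" "X \<subseteq> Z2" using Z unfolding restr_def by auto
              hence "Z1 = Z2" using uq Z by blast
              thus False using Z pq(3) by simp
            qed
          qed
          show "{} \<notin> P" unfolding P_def using ZrZ by blast
        qed
        show "partition_on (\<Union>H) (Union ` P)"
          unfolding UP
        proof (rule partition_onI)
          show "\<Union>Zs = \<Union>H" using UZs V_def by simp
          show "disjnt p q" if "p \<in> Zs" "q \<in> Zs" "p \<noteq> q" for p q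
            using dj that unfolding disjnt_def by simp
          show "{} \<notin> Zs" using Zne by blast
        qed
        show "inj_on Union P"
        proof (rule inj_onI)
          fix p q assume "p \<in> P" "q \<in> P" "\<Union>p = \<Union>q"
          then obtain Z1 Z2 where Z: "Z1 \<in> Zs" "Z2 \<in> Zs" "p = restr H Z1" "q = restr H Z2"
              "\<Union>p = \<Union>q"
            unfolding P_def by blast
          hence "Z1 = Z2" using rU by metis
          thus "p = q" using Z by simp
        qed
      qed
      have conP: "hconnected B" if "B \<in> P" for B
      proof -
        obtain Z where Z: "Z \<in> Zs" "B = restr H Z" using \<open>B \<in> P\<close> unfolding P_def by blast
        show ?thesis unfolding Z(2)
          by (rule hcon_carrier[OF hyp_restr[OF hyp]]) (use rU[OF Z(1)] ZrZ[OF Z(1)] in simp)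
      qed
      have ncon: "\<not> hconnected H"
      proof
        assume "hconnected H"
        hence "P = {H}" using hpP triv_hpart[OF hyp Hne] unfolding hconnected_def by blast
        hence "card P = 1" by simp
        thus False using cardP card2 by simp
      qed
      have fin: "finest_hpartition H P" unfolding finest_hpartition_def using hpP conP by blast
      have card2P: "card P \<ge> 2" using cardP card2 by simp
      have antiZ: "\<forall>S. antichain (restr M Z) S \<longrightarrow> misses H S" for Z
        by (rule anti_mono[OF anti restr_sub]) simp
      have MZH: "restr M Z \<subseteq> H" for Z using MH restr_sub by blast
      have le: "card (restr M Z) \<le> card Z" if Z: "Z \<in> Zs" for Z
      proof -
        have "card (restr M Z) \<le> card (\<Union>(restr M Z))" by (rule lemA[OF hyp sat MZH antiZ])
        also have "\<dots> \<le> card Z"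
          by (rule card_mono) (use elts ZsH Z in \<open>blast\<close>, auto simp: restr_def)
        finally show ?thesis .
      qed
      have Mdec: "M = (\<Union>Z\<in>Zs. restr M Z)"
      proof
        show "M \<subseteq> (\<Union>Z\<in>Zs. restr M Z)"
        proof
          fix X assume X: "X \<in> M"
          then obtain Z where "Z \<in> Zs" "X \<subseteq> Z" using above MH by blast
          thus "X \<in> (\<Union>Z\<in>Zs. restr M Z)" using X unfolding restr_def by blast
        qed
        show "(\<Union>Z\<in>Zs. restr M Z) \<subseteq> M" using restr_sub by blast
      qed
      have cM1: "card M = (\<Sum>Z\<in>Zs. card (restr M Z))"
      proof -
        have "card (\<Union>Z\<in>Zs. restr M Z) = (\<Sum>Z\<in>Zs. card (restr M Z))"
        proof (rule card_UN_disjoint)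
          show "finite Zs" by fact
          show "\<forall>i\<in>Zs. finite (restr M i)" using finM restr_sub finite_subset by blast
          show "\<forall>i\<in>Zs. \<forall>j\<in>Zs. i \<noteq> j \<longrightarrow> restr M i \<inter> restr M j = {}"
          proof (intro ballI impI)
            fix i j assume ij: "i \<in> Zs" "j \<in> Zs" "i \<noteq> j"
            show "restr M i \<inter> restr M j = {}"
            proof (rule ccontr)
              assume "restr M i \<inter> restr M j \<noteq> {}"
              then obtain X where "X \<in> restr M i" "X \<in> restr M j" by blast
              hence "X \<in> H" "X \<subseteq> i" "X \<subseteq> j" using MH unfolding restr_def by auto
              hence "i = j" using uq ij by blast
              thus False using ij by simp
            qed
          qed
        qed
        thus ?thesis using Mdec by simp
      qed
      have cV1: "card V = (\<Sum>Z\<in>Zs. card Z)"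
      proof -
        have "card (\<Union>Z\<in>Zs. Z) = (\<Sum>Z\<in>Zs. card Z)"
        proof (rule card_UN_disjoint)
          show "finite Zs" by fact
          show "\<forall>i\<in>Zs. finite i" using elts ZsH by blast
          show "\<forall>i\<in>Zs. \<forall>j\<in>Zs. i \<noteq> j \<longrightarrow> i \<inter> j = {}" using dj by blast
        qed
        thus ?thesis using UZs by simp
      qed
      have eqZ: "card (restr M Z) = card Z" if Z: "Z \<in> Zs" for Z
      proof (rule ccontr)
        assume "card (restr M Z) \<noteq> card Z"
        hence "card (restr M Z) < card Z" using le[OF Z] by simp
        hence "(\<Sum>Z\<in>Zs. card (restr M Z)) < (\<Sum>Z\<in>Zs. card Z)"
          using sum_strict_mono_ex1[OF finZs, of "\<lambda>Z. card (restr M Z)" card] le Z by blast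
        thus False using cM1 cV1 cM V_def by simp
      qed
      have conB: "construction B (restr M (\<Union>B))" if "B \<in> P" for B
      proof -
        obtain Z where Z: "Z \<in> Zs" "B = restr H Z" using \<open>B \<in> P\<close> unfolding P_def by blast
        have "construction (restr H Z) (restr M Z)"
        proof (rule less.IH[OF Zlt[OF Z(1)]])
          show "card (\<Union>(restr H Z)) = card Z" using rU[OF Z(1)] by simp
          show "hypergraph (restr H Z)" by (rule hyp_restr[OF hyp])
          show "atomic (restr H Z)" by (rule atomic_restr[OF at])
          show "saturated (restr H Z)" by (rule sat_restr[OF sat])
          show "restr M Z \<subseteq> restr H Z" using MH unfolding restr_def by auto
          show "\<forall>S. antichain (restr M Z) S \<longrightarrow> misses (restr H Z) S"
            by (rule anti_mono[OF anti restr_sub restr_sub])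
          show "card (restr M Z) = card (\<Union>(restr H Z))" using rU[OF Z(1)] eqZ[OF Z(1)] by simp
        qed
        thus ?thesis using Z rU[OF Z(1)] by simp
      qed
      have "construction H (\<Union>B\<in>P. restr M (\<Union>B))"
        by (rule construction.disc[OF hyp at ncon fin card2P]) (use conB in blast)
      moreover have "(\<Union>B\<in>P. restr M (\<Union>B)) = M"
      proof -
        have "(\<Union>B\<in>P. restr M (\<Union>B)) = (\<Union>Z\<in>Zs. restr M (\<Union>(restr H Z)))"
          unfolding P_def by simp
        also have "\<dots> = (\<Union>Z\<in>Zs. restr M Z)" using rU by simp
        finally show ?thesis using Mdec by simp
      qed
      ultimately show ?thesis by simp
    qed
  qed
qed


theorem proposition6p11:
  fixes H M :: "'a set set"
  assumes "hypergraph H" and "ASC H" and "M \<subseteq> H"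
  shows "((\<forall>S. antichain M S \<longrightarrow> misses H S) \<and> card M = card (\<Union>H))
         \<longleftrightarrow> construction H M"
proof
  have at: "atomic H" and sat: "saturated H" using assms(2) unfolding ASC_def by auto
  assume a: "(\<forall>S. antichain M S \<longrightarrow> misses H S) \<and> card M = card (\<Union>H)"
  show "construction H M"
    by (rule main_aux[OF refl assms(1) at sat assms(3)]) (use a in simp_all)
next
  assume c: "construction H M"
  have "(\<forall>X\<in>M. X \<noteq> {} \<and> X \<subseteq> \<Union>H) \<and> finite M \<and> card M = card (\<Union>H)
         \<and> (\<forall>S. antichain M S \<longrightarrow> \<Union>S \<notin> H)" by (rule constr_props[OF c])
  thus "(\<forall>S. antichain M S \<longrightarrow> misses H S) \<and> card M = card (\<Union>H)"
    unfolding misses_def by simp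
qed

end
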